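(* Let $f\colon\prod_{i\in[n]}X_i\to Y$ satisfy condition (BC) and $\Phi_k^-\le\Phi_k^+$ for all $k\in[n]$, and let $\varphi_k\colon X_k\to Y$ ($k\in[n]$) be maps satisfying the boundary condition with $\Phi_k^-\le\varphi_k\le\Phi_k^+$ for all $k$. Put $a_k=\varphi_k(0_{X_k})$, $b_k=\varphi_k(1_{X_k})$, and for $I\subseteq[n]$ let $\mathbf{e}_I\in Y^n$ have $i$-th component $b_i$ if $i\in I$ and $a_i$ if $i\notin I$. Then a polynomial function $p\colon Y^n\to Y$ satisfies $f(\mathbf{x})=p(\varphi_1(x_1),\ldots,\varphi_n(x_n))$ for all $\mathbf{x}$ if and only if $p(\mathbf{e}_I)=f(\widehat{\mathbf{1}}_I)$ for all $I\subseteq[n]$.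
   Context: $Y$ is a finite distributive lattice identified with a sublattice of $\mathcal{P}(U)$ for a finite set $U$, with least element $0=\emptyset$, greatest element $1=U$, and $\wedge,\vee$ being intersection and union; $\overline{S}=U\setminus S$. For $S\subseteq U$, $\operatorname{cl}(S)=\bigwedge\{y\in Y: y\ge S\}$, $\operatorname{int}(S)=\bigvee\{y\in Y: y\le S\}$. $[n]=\{1,\ldots,n\}$; $X_1,\ldots,X_n$ are arbitrary sets with at least two elements, each with two fixed distinct elements $0_{X_k},1_{X_k}$ (written $0,1$). For $\mathbf{x}\in\prod_i X_i$ and $a\in X_k$, $\mathbf{x}_k^a$ is $\mathbf{x}$ with $k$-th component replaced by $a$. For $I\subseteq[n]$, $\widehat{\mathbf{1}}_I$ is the tuple whose $i$-th component is $1_{X_i}$ if $i\in I$ and $0_{X_i}$ otherwise. A map $\varphi_k\colon X_k\to Y$ satisfies the boundary condition if $\varphi_k(0_{X_k})\le\varphi_k(x_k)\le\varphi_k(1_{X_k})$ for all $x_k$. A polynomial function $Y^n\to Y$ is a composition of $\wedge,\vee$ with variables and constants. Condition (BC): $f(\mathbf{x}_k^0)\le f(\mathbf{x})\le f(\mathbf{x}_k^1)$ for all $k$ and $\mathbf{x}$. For $k\in[n]$, $a_k\in X_k$: $$\Phi_k^-(a_k)=\bigvee_{\mathbf{x}:\,x_k=a_k}\operatorname{cl}\big(f(\mathbf{x})\wedge\overline{f(\mathbf{x}_k^0)}\big),\qquad \Phi_k^+(a_k)=\bigwedge_{\mathbf{x}:\,x_k=a_k}\operatorname{int}\big(f(\mathbf{x})\vee\overline{f(\mathbf{x}_k^1)}\big),$$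 ranging over all $\mathbf{x}$ with $k$-th component $a_k$. *)

theory Defs
  imports "HOL-Library.FuncSet"
begin

definition set_lattice :: "'u set \<Rightarrow> 'u set set \<Rightarrow> bool" where
  "set_lattice U Y \<longleftrightarrow> finite U \<and> Y \<subseteq> Pow U \<and> {} \<in> Y \<and> U \<in> Y \<and>
     (\<forall>y\<in>Y. \<forall>z\<in>Y. y \<inter> z \<in> Y \<and> y \<union> z \<in> Y)"

definition cl :: "'u set \<Rightarrow> 'u set set \<Rightarrow> 'u set \<Rightarrow> 'u set" where
  "cl U Y S = U \<inter> \<Inter>{y\<in>Y. S \<subseteq> y}"

definition intr :: "'u set set \<Rightarrow> 'u set \<Rightarrow> 'u set" where
  "intr Y S = \<Union>{y\<in>Y. y \<subseteq> S}"

abbreviation tuples :: "nat \<Rightarrow> (nat \<Rightarrow> 'x set) \<Rightarrow> (nat \<Rightarrow> 'x) set" where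
  "tuples n X \<equiv> PiE {1..n} X"

definition Phi_minus ::
  "'u set \<Rightarrow> 'u set set \<Rightarrow> nat \<Rightarrow> (nat \<Rightarrow> 'x set) \<Rightarrow> (nat \<Rightarrow> 'x) \<Rightarrow> ((nat \<Rightarrow> 'x) \<Rightarrow> 'u set)
    \<Rightarrow> nat \<Rightarrow> 'x \<Rightarrow> 'u set" where
  "Phi_minus U Y n X zero f k a =
     \<Union>{cl U Y (f x \<inter> (U - f (x(k := zero k)))) | x. x \<in> tuples n X \<and> x k = a}"

definition Phi_plus ::
  "'u set \<Rightarrow> 'u set set \<Rightarrow> nat \<Rightarrow> (nat \<Rightarrow> 'x set) \<Rightarrow> (nat \<Rightarrow> 'x) \<Rightarrow> ((nat \<Rightarrow> 'x) \<Rightarrow> 'u set)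
    \<Rightarrow> nat \<Rightarrow> 'x \<Rightarrow> 'u set" where
  "Phi_plus U Y n X one f k a =
     U \<inter> \<Inter>{intr Y (f x \<union> (U - f (x(k := one k)))) | x. x \<in> tuples n X \<and> x k = a}"

datatype 'u lterm = Var nat | Const "'u set" | Meet "'u lterm" "'u lterm" | Join "'u lterm" "'u lterm"

fun leval :: "'u lterm \<Rightarrow> (nat \<Rightarrow> 'u set) \<Rightarrow> 'u set" where
  "leval (Var i) y = y i"
| "leval (Const c) y = c"
| "leval (Meet s t) y = leval s y \<inter> leval t y"
| "leval (Join s t) y = leval s y \<union> leval t y"

fun lvars :: "'u lterm \<Rightarrow> nat set" where
  "lvars (Var i) = {i}"
| "lvars (Const c) = {}"
| "lvars (Meet s t) = lvars s \<union> lvars t"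
| "lvars (Join s t) = lvars s \<union> lvars t"

fun lconsts :: "'u lterm \<Rightarrow> 'u set set" where
  "lconsts (Var i) = {}"
| "lconsts (Const c) = {c}"
| "lconsts (Meet s t) = lconsts s \<union> lconsts t"
| "lconsts (Join s t) = lconsts s \<union> lconsts t"

definition polyfun :: "'u set set \<Rightarrow> nat \<Rightarrow> ((nat \<Rightarrow> 'u set) \<Rightarrow> 'u set) \<Rightarrow> bool" where
  "polyfun Y n p \<longleftrightarrow> (\<exists>t. lvars t \<subseteq> {1..n} \<and> lconsts t \<subseteq> Y \<and>
      (\<forall>y\<in>PiE {1..n} (\<lambda>_. Y). p y = leval t y))"

definition hat1 :: "nat \<Rightarrow> (nat \<Rightarrow> 'x) \<Rightarrow> (nat \<Rightarrow> 'x) \<Rightarrow> nat set \<Rightarrow> (nat \<Rightarrow> 'x)" where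
  "hat1 n zero one I = (\<lambda>i\<in>{1..n}. if i \<in> I then one i else zero i)"

end

theory Submission
  imports Defs
begin

lemma leval_mono:
  assumes "a \<subseteq> b"
  shows "leval t (y(k:=a)) \<subseteq> leval t (y(k:=b))"
  using assms by (induction t) auto

lemma leval_med:
  assumes "a \<subseteq> y k" "y k \<subseteq> b"
  shows "leval t y = leval t (y(k:=a)) \<union> (y k \<inter> leval t (y(k:=b)))"
  using assms
proof (induction t)
  case (Var i) then show ?case by auto
next
  case (Const c) then show ?case by auto
next
  case (Meet s t)
  have m1: "leval s (y(k:=a)) \<subseteq> leval s (y(k:=b))"
    using leval_mono Meet.prems by (metis order_trans)
  have m2: "leval t (y(k:=a)) \<subseteq> leval t (y(k:=b))"
    using leval_mono Meet.prems by (metis order_trans)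
  have e1: "leval s y = leval s (y(k:=a)) \<union> (y k \<inter> leval s (y(k:=b)))" using Meet by blast
  have e2: "leval t y = leval t (y(k:=a)) \<union> (y k \<inter> leval t (y(k:=b)))" using Meet by blast
  show ?case unfolding leval.simps e1 e2 using m1 m2 by blast
next
  case (Join s t)
  have e1: "leval s y = leval s (y(k:=a)) \<union> (y k \<inter> leval s (y(k:=b)))" using Join by blast
  have e2: "leval t y = leval t (y(k:=a)) \<union> (y k \<inter> leval t (y(k:=b)))" using Join by blast
  show ?case unfolding leval.simps e1 e2 by blast
qed

theorem mainTheorem8:
  fixes U :: "'u set" and Y :: "'u set set" and n :: nat
    and X :: "nat \<Rightarrow> 'x set" and zero one :: "nat \<Rightarrow> 'x"
    and f :: "(nat \<Rightarrow> 'x) \<Rightarrow> 'u set" and \<phi> :: "nat \<Rightarrow> 'x \<Rightarrow> 'u set"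
    and p :: "(nat \<Rightarrow> 'u set) \<Rightarrow> 'u set"
  assumes Y: "set_lattice U Y"
    and X: "\<forall>k\<in>{1..n}. zero k \<in> X k \<and> one k \<in> X k \<and> zero k \<noteq> one k"
    and f_into: "\<forall>x\<in>tuples n X. f x \<in> Y"
    and BC: "\<forall>k\<in>{1..n}. \<forall>x\<in>tuples n X.
               f (x(k := zero k)) \<subseteq> f x \<and> f x \<subseteq> f (x(k := one k))"
    and Phi_le: "\<forall>k\<in>{1..n}. \<forall>a\<in>X k.
               Phi_minus U Y n X zero f k a \<subseteq> Phi_plus U Y n X one f k a"
    and phi_into: "\<forall>k\<in>{1..n}. \<forall>a\<in>X k. \<phi> k a \<in> Y"
    and phi_bd: "\<forall>k\<in>{1..n}. \<forall>a\<in>X k. \<phi> k (zero k) \<subseteq> \<phi> k a \<and> \<phi> k a \<subseteq> \<phi> k (one k)"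
    and phi_between: "\<forall>k\<in>{1..n}. \<forall>a\<in>X k.
               Phi_minus U Y n X zero f k a \<subseteq> \<phi> k a \<and> \<phi> k a \<subseteq> Phi_plus U Y n X one f k a"
    and p: "polyfun Y n p"
  shows "(\<forall>x\<in>tuples n X. f x = p (\<lambda>i\<in>{1..n}. \<phi> i (x i)))
     \<longleftrightarrow> (\<forall>I\<subseteq>{1..n}.
            p (\<lambda>i\<in>{1..n}. if i \<in> I then \<phi> i (one i) else \<phi> i (zero i))
              = f (hat1 n zero one I))"
proof
  assume H: "\<forall>x\<in>tuples n X. f x = p (\<lambda>i\<in>{1..n}. \<phi> i (x i))"
  show "\<forall>I\<subseteq>{1..n}.
            p (\<lambda>i\<in>{1..n}. if i \<in> I then \<phi> i (one i) else \<phi> i (zero i))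
              = f (hat1 n zero one I)"
  proof (intro allI impI)
    fix I assume "I \<subseteq> {1..n}"
    have hx: "hat1 n zero one I \<in> tuples n X" using X unfolding hat1_def by auto
    have eq: "(\<lambda>i\<in>{1..n}. \<phi> i (hat1 n zero one I i)) =
          (\<lambda>i\<in>{1..n}. if i \<in> I then \<phi> i (one i) else \<phi> i (zero i))"
      unfolding hat1_def by (rule ext) auto
    have "f (hat1 n zero one I) = p (\<lambda>i\<in>{1..n}. \<phi> i (hat1 n zero one I i))"
      using H hx by (rule bspec)
    then show "p (\<lambda>i\<in>{1..n}. if i \<in> I then \<phi> i (one i) else \<phi> i (zero i))
              = f (hat1 n zero one I)" unfolding eq by simp
  qed
next
  assume H: "\<forall>I\<subseteq>{1..n}.
            p (\<lambda>i\<in>{1..n}. if i \<in> I then \<phi> i (one i) else \<phi> i (zero i))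
              = f (hat1 n zero one I)"
  obtain t where "lvars t \<subseteq> {1..n} \<and> lconsts t \<subseteq> Y \<and>
      (\<forall>y\<in>PiE {1..n} (\<lambda>_. Y). p y = leval t y)"
    using p unfolding polyfun_def by (elim exE) 
  hence t: "\<forall>y\<in>PiE {1..n} (\<lambda>_. Y). p y = leval t y" by (elim conjE)
  have YU: "\<forall>y\<in>Y. y \<subseteq> U" using Y unfolding set_lattice_def by auto
  define F where "F x = (\<lambda>i\<in>{1..n}. \<phi> i (x i))" for x
  have FY: "F x \<in> PiE {1..n} (\<lambda>_. Y)" if "x \<in> tuples n X" for x
    using that phi_into unfolding F_def by auto
  have Fupd: "F (x(k:=a)) = (F x)(k := \<phi> k a)" if "k \<in> {1..n}" for x k a
    using that unfolding F_def by (rule_tac ext) auto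
  have pmed: "p (F x) = p ((F x)(k := \<phi> k (zero k))) \<union> (\<phi> k (x k) \<inter> p ((F x)(k := \<phi> k (one k))))"
    if x: "x \<in> tuples n X" and k: "k \<in> {1..n}" for x k
  proof -
    have xk: "x k \<in> X k" using x k by auto
    have z: "zero k \<in> X k" "one k \<in> X k" using X k by auto
    have Fk: "F x k = \<phi> k (x k)" using k unfolding F_def by auto
    have m: "leval t (F x) = leval t ((F x)(k := \<phi> k (zero k))) \<union> (F x k \<inter> leval t ((F x)(k := \<phi> k (one k))))"
      by (rule leval_med) (use phi_bd k xk Fk in auto)
    have i0: "(F x)(k := \<phi> k (zero k)) \<in> PiE {1..n} (\<lambda>_. Y)"
      using FY[OF x] phi_into k z by (auto simp: PiE_iff extensional_def)
    have i1: "(F x)(k := \<phi> k (one k)) \<in> PiE {1..n} (\<lambda>_. Y)"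
      using FY[OF x] phi_into k z by (auto simp: PiE_iff extensional_def)
    show ?thesis using m t FY[OF x] i0 i1 Fk by simp
  qed
  have fmed: "f x = f (x(k:=zero k)) \<union> (\<phi> k (x k) \<inter> f (x(k:=one k)))"
    if x: "x \<in> tuples n X" and k: "k \<in> {1..n}" for x k
  proof -
    have xk: "x k \<in> X k" using x k by auto
    have z: "zero k \<in> X k" "one k \<in> X k" using X k by auto
    have x0: "x(k:=zero k) \<in> tuples n X" and x1: "x(k:=one k) \<in> tuples n X"
      using x k z by (auto simp: PiE_iff extensional_def)
    have fU: "f x \<subseteq> U" "f (x(k:=one k)) \<subseteq> U" using f_into YU x x1 by auto
    have bc: "f (x(k := zero k)) \<subseteq> f x" "f x \<subseteq> f (x(k := one k))" using BC x k by auto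
    have "f x \<inter> (U - f (x(k := zero k))) \<subseteq> cl U Y (f x \<inter> (U - f (x(k := zero k))))"
      unfolding cl_def using fU by auto
    also have "\<dots> \<subseteq> Phi_minus U Y n X zero f k (x k)"
      unfolding Phi_minus_def using x by blast
    also have "\<dots> \<subseteq> \<phi> k (x k)" using phi_between k xk by auto
    finally have A: "f x \<inter> (U - f (x(k := zero k))) \<subseteq> \<phi> k (x k)" .
    have "\<phi> k (x k) \<subseteq> Phi_plus U Y n X one f k (x k)" using phi_between k xk by auto
    also have "\<dots> \<subseteq> intr Y (f x \<union> (U - f (x(k := one k))))"
      unfolding Phi_plus_def using x by blast
    also have "\<dots> \<subseteq> f x \<union> (U - f (x(k := one k)))"
      unfolding intr_def by auto
    finally have B: "\<phi> k (x k) \<subseteq> f x \<union> (U - f (x(k := one k)))" .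
    show ?thesis using A B fU bc by blast
  qed
  define D where "D x = {i\<in>{1..n}. x i \<noteq> zero i \<and> x i \<noteq> one i}" for x
  have main: "\<forall>x\<in>tuples n X. card (D x) = m \<longrightarrow> f x = p (F x)" for m
  proof (induction m rule: less_induct)
    case (less m)
    show ?case
    proof (intro ballI impI)
      fix x assume x: "x \<in> tuples n X" and cm: "card (D x) = m"
      show "f x = p (F x)"
      proof (cases "D x = {}")
        case True
        define I where "I = {i\<in>{1..n}. x i = one i}"
        have hx: "x = hat1 n zero one I"
          unfolding hat1_def I_def
        proof (rule ext)
          fix i show "x i = (\<lambda>i\<in>{1..n}. if i \<in> {i \<in> {1..n}. x i = one i} then one i else zero i) i"
            using True x unfolding D_def by (cases "i \<in> {1..n}") (auto simp: PiE_iff extensional_def)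
        qed
        have Fx: "F x = (\<lambda>i\<in>{1..n}. if i \<in> I then \<phi> i (one i) else \<phi> i (zero i))"
          using True unfolding F_def D_def by (rule_tac ext) (auto simp: I_def)
        have Isub: "I \<subseteq> {1..n}" unfolding I_def by auto
        have HI: "p (\<lambda>i\<in>{1..n}. if i \<in> I then \<phi> i (one i) else \<phi> i (zero i))
              = f (hat1 n zero one I)" using H Isub by blast
        have "f x = f (hat1 n zero one I)" using hx by (rule arg_cong)
        then show ?thesis unfolding Fx using HI by simp
      next
        case False
        then obtain k where kD: "k \<in> D x" by blast
        hence k: "k \<in> {1..n}" unfolding D_def by auto
        have z: "zero k \<in> X k" "one k \<in> X k" using X k by auto
        have x0: "x(k:=zero k) \<in> tuples n X" and x1: "x(k:=one k) \<in> tuples n X"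
          using x k z by (auto simp: PiE_iff extensional_def)
        have fin: "finite (D x)" unfolding D_def by auto
        have D0: "D (x(k:=zero k)) = D x - {k}" unfolding D_def by auto
        have D1: "D (x(k:=one k)) = D x - {k}" using X k unfolding D_def by auto
        have lt: "card (D x - {k}) < m" using cm fin kD card_gt_0_iff[of "D x"] by (auto simp: card_Diff1_less)
        have e0: "f (x(k:=zero k)) = p (F (x(k:=zero k)))" using less.IH[OF lt] x0 D0 by metis
        have e1: "f (x(k:=one k)) = p (F (x(k:=one k)))" using less.IH[OF lt] x1 D1 by metis
        show ?thesis using fmed[OF x k] pmed[OF x k] e0 e1 Fupd[OF k] by simp
      qed
    qed
  qed
  show "\<forall>x\<in>tuples n X. f x = p (\<lambda>i\<in>{1..n}. \<phi> i (x i))"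
  proof
    fix x assume x: "x \<in> tuples n X"
    have "f x = p (F x)" using main[of "card (D x)"] x by blast
    then show "f x = p (\<lambda>i\<in>{1..n}. \<phi> i (x i))" unfolding F_def .
  qed
qed

end
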